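(* Let $p$ be a prime, $\Phi:\mathbb{N}\to\mathbb{N}$ strictly increasing, and $f\in\mathcal{F}(\Phi)$. Let $n_0,u\in\mathbb{N}$ with $u<p^{1+\Phi(n_0)}$, and let $\Lambda:=\{u'\in\mathbb{Z}_p: u'\equiv u\pmod{p^{1+\Phi(n_0)}}\}$. Assume $f$ is uniformly approximable on $\Lambda$ with respect to $\Phi$, with constants $h(\Lambda)$, $l(\Lambda)$, and assume that $n_0+1\ge l(\Lambda)$, that $f(u)\equiv 0\pmod{p^{h(\Lambda)+n_0+1}}$, and that $|(\delta_nf)(u')|_p=1$ for all $n\ge n_0$ and all $u'\in\Lambda$. Then there exists a unique $\xi\in\mathbb{Z}_p$ such that $f(\xi)=0$, $\xi\equiv u\pmod{p^{1+\Phi(n_0)}}$, and $\rho(\xi;n+1)\in\{0,1,\dots,p-1\}$ for every $n\ge n_0$.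
   Context: $\mathbb{N}=\{0,1,2,\dots\}$. $|\cdot|_p$ is the $p$-adic absolute value with $|p|_p=p^{-1}$. Each $x\in\mathbb{Z}_p$ is written $x=\sum_{i\ge0}x_ip^i$ with digits $x_i\in\{0,\dots,p-1\}$. Set $\Phi(-1):=-1$. $\mathcal{F}(\Phi)$ is the class of continuous $f:\mathbb{Z}_p\to\mathbb{Z}_p$ such that for every positive integer $n$ and all $x,y\in\mathbb{Z}_p$: if $|x-y|_p\le p^{-1-\Phi(n-1)}$ then $|f(x)-f(y)|_p\le p^{-n}$. For $x\in\mathbb{Z}_p$ and $j\in\mathbb{N}$, $\rho(x;j):=p^{-1-\Phi(j-1)}\sum_{i=1+\Phi(j-1)}^{\Phi(j)}x_ip^i$. A function $f:\mathbb{Z}_p\to\mathbb{Z}_p$ is approximable at $u\in\mathbb{Z}_p$ with respect to $\Phi$ if there exist nonnegative integers $h=h(u)$, $l=l(u)$ and $p$-adic numbers $(\delta_nf)(u)$ ($n\ge l$) such that for every integer $n\ge l$ and every $u'\in\mathbb{Z}_p$, $f(u+p^{1+\Phi(n-1)}u')\equiv f(u)+p^{h+n}u'\,(\delta_nf)(u)\pmod{p^{h+n+1}}$ (i.e. the difference of the two sides has $p$-adic valuation at least $h+n+1$). $f$ is uniformly approximable on $\Lambda\subset\mathbb{Z}_p$ with respect to $\Phi$ if it is approximable at every $u\in\Lambda$ with respect to $\Phi$ and $h(u)$, $l(u)$ can be chosen constant on $\Lambda$; these constants are denoted $h(\Lambda)$, $l(\Lambda)$. *)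

theory Defs
  imports "HOL-Computational_Algebra.Primes"
begin

text \<open>p-adic integers represented by their compatible sequence of truncations:
  x k is the residue of x modulo p^k, in [0, p^k).\<close>

definition Zp :: "nat \<Rightarrow> (nat \<Rightarrow> int) set" where
  "Zp p = {x. (\<forall>k. 0 \<le> x k \<and> x k < int p ^ k) \<and> (\<forall>k. x (Suc k) mod int p ^ k = x k)}"

definition zp_of_int :: "nat \<Rightarrow> int \<Rightarrow> (nat \<Rightarrow> int)" where
  "zp_of_int p a = (\<lambda>k. a mod int p ^ k)"

definition zp_add :: "nat \<Rightarrow> (nat \<Rightarrow> int) \<Rightarrow> (nat \<Rightarrow> int) \<Rightarrow> (nat \<Rightarrow> int)" where
  "zp_add p x y = (\<lambda>k. (x k + y k) mod int p ^ k)"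

definition zp_mult :: "nat \<Rightarrow> (nat \<Rightarrow> int) \<Rightarrow> (nat \<Rightarrow> int) \<Rightarrow> (nat \<Rightarrow> int)" where
  "zp_mult p x y = (\<lambda>k. (x k * y k) mod int p ^ k)"

text \<open>x \<equiv> y (mod p^m), i.e. |x - y|_p \<le> p^(-m).\<close>
definition zp_cong :: "nat \<Rightarrow> nat \<Rightarrow> (nat \<Rightarrow> int) \<Rightarrow> (nat \<Rightarrow> int) \<Rightarrow> bool" where
  "zp_cong p m x y \<longleftrightarrow> x m = y m"

definition zp_continuous :: "nat \<Rightarrow> ((nat \<Rightarrow> int) \<Rightarrow> (nat \<Rightarrow> int)) \<Rightarrow> bool" where
  "zp_continuous p f \<longleftrightarrow> (\<forall>x\<in>Zp p. \<forall>m. \<exists>N. \<forall>y\<in>Zp p. zp_cong p N x y \<longrightarrow> zp_cong p m (f x) (f y))"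

text \<open>the exponent 1 + \<Phi>(n-1), with the convention \<Phi>(-1) = -1\<close>
definition phiexp :: "(nat \<Rightarrow> nat) \<Rightarrow> nat \<Rightarrow> nat" where
  "phiexp \<Phi> n = (if n = 0 then 0 else Suc (\<Phi> (n - 1)))"

definition classF :: "nat \<Rightarrow> (nat \<Rightarrow> nat) \<Rightarrow> ((nat \<Rightarrow> int) \<Rightarrow> (nat \<Rightarrow> int)) set" where
  "classF p \<Phi> = {f. (\<forall>x\<in>Zp p. f x \<in> Zp p) \<and> zp_continuous p f \<and>
     (\<forall>n>0. \<forall>x\<in>Zp p. \<forall>y\<in>Zp p. zp_cong p (phiexp \<Phi> n) x y \<longrightarrow> zp_cong p n (f x) (f y))}"

definition digit :: "nat \<Rightarrow> (nat \<Rightarrow> int) \<Rightarrow> nat \<Rightarrow> nat" where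
  "digit p x i = nat ((x (Suc i) - x i) div int p ^ i)"

definition rho :: "nat \<Rightarrow> (nat \<Rightarrow> nat) \<Rightarrow> (nat \<Rightarrow> int) \<Rightarrow> nat \<Rightarrow> nat" where
  "rho p \<Phi> x j = (\<Sum>i\<in>{phiexp \<Phi> j..\<Phi> j}. digit p x i * p ^ (i - phiexp \<Phi> j))"

text \<open>f is uniformly approximable on \<Lambda> w.r.t. \<Phi> with constants h, l and
  approximants \<delta> n u = (\<delta>_n f)(u).\<close>
definition unif_approx ::
  "nat \<Rightarrow> (nat \<Rightarrow> nat) \<Rightarrow> ((nat \<Rightarrow> int) \<Rightarrow> (nat \<Rightarrow> int)) \<Rightarrow> (nat \<Rightarrow> int) set
     \<Rightarrow> nat \<Rightarrow> nat \<Rightarrow> (nat \<Rightarrow> (nat \<Rightarrow> int) \<Rightarrow> (nat \<Rightarrow> int)) \<Rightarrow> bool" where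
  "unif_approx p \<Phi> f \<Lambda> h l \<delta> \<longleftrightarrow>
     (\<forall>u\<in>\<Lambda>. \<forall>n\<ge>l. \<delta> n u \<in> Zp p \<and>
        (\<forall>u'\<in>Zp p.
           zp_cong p (h + n + 1)
             (f (zp_add p u (zp_mult p (zp_of_int p (int p ^ phiexp \<Phi> n)) u')))
             (zp_add p (f u) (zp_mult p (zp_mult p (zp_of_int p (int p ^ (h + n))) u') (\<delta> n u)))))"

end

theory Submission
  imports Defs
begin

lemma Zp_range: "x \<in> Zp p \<Longrightarrow> 0 \<le> x k \<and> x k < int p ^ k"
  by (simp add: Zp_def)

lemma Zp_compat: "x \<in> Zp p \<Longrightarrow> x (Suc k) mod int p ^ k = x k"
  by (simp add: Zp_def)

lemma Zp_mod:
  assumes x: "x \<in> Zp p" and km: "k \<le> m"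
  shows "x m mod int p ^ k = x k"
  using km
proof (induction m)
  case 0
  then show ?case using Zp_range[OF x, of 0] by simp
next
  case (Suc m)
  show ?case
  proof (cases "k = Suc m")
    case True
    then show ?thesis using Zp_range[OF x, of "Suc m"] by simp
  next
    case False
    then have "k \<le> m" using Suc.prems by simp
    have "x (Suc m) mod int p ^ k = x (Suc m) mod int p ^ m mod int p ^ k"
      by (simp add: \<open>k \<le> m\<close> le_imp_power_dvd mod_mod_cancel)
    also have "\<dots> = x k" using Zp_compat[OF x] Suc.IH[OF \<open>k \<le> m\<close>] by simp
    finally show ?thesis .
  qed
qed

lemma zp_of_int_Zp: "p > 0 \<Longrightarrow> zp_of_int p a \<in> Zp p"
  unfolding Zp_def zp_of_int_def
  by (auto simp: le_imp_power_dvd mod_mod_cancel)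

lemma zp_add_of_int:
  "zp_add p (zp_of_int p a) (zp_mult p (zp_of_int p b) (zp_of_int p c)) = zp_of_int p (a + b*c)"
  unfolding zp_add_def zp_mult_def zp_of_int_def
  by (simp add: mod_add_eq mod_mult_eq)

lemma digit_eq:
  assumes x: "x \<in> Zp p" and p: "p > 0"
  shows "int (digit p x i) * int p ^ i = x (Suc i) - x i"
proof -
  have "x (Suc i) mod int p ^ i = x i" using Zp_compat[OF x] .
  then have eq: "x (Suc i) - x i = int p ^ i * (x (Suc i) div int p ^ i)"
    by (metis add_diff_cancel_right' div_mult_mod_eq mult.commute)
  have "0 \<le> x (Suc i) div int p ^ i" using Zp_range[OF x, of "Suc i"] p by (simp add: pos_imp_zdiv_nonneg_iff)
  moreover have "(x (Suc i) - x i) div int p ^ i = x (Suc i) div int p ^ i"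
    using eq p by simp
  ultimately show ?thesis unfolding digit_def using eq by (simp add: mult.commute)
qed

lemma tele:
  assumes x: "x \<in> Zp p" and p: "p > 0" and AB: "A \<le> Suc B"
  shows "x (Suc B) = x A + int p ^ A * int (\<Sum>i\<in>{A..B}. digit p x i * p ^ (i - A))"
proof -
  have "int p ^ A * int (\<Sum>i\<in>{A..B}. digit p x i * p ^ (i - A))
      = (\<Sum>i\<in>{A..B}. int (digit p x i) * int p ^ i)"
    unfolding of_nat_sum sum_distrib_left
  proof (rule sum.cong)
    fix i assume "i \<in> {A..B}"
    then have "i = A + (i - A)" by simp
    then have "int p ^ i = int p ^ A * int p ^ (i - A)" by (metis power_add)
    then show "int p ^ A * int (digit p x i * p ^ (i - A)) = int (digit p x i) * int p ^ i"
      by simp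
  qed simp
  also have "\<dots> = (\<Sum>i\<in>{A..B}. x (Suc i) - x i)"
    using digit_eq[OF x p] by simp
  also have "\<dots> = x (Suc B) - x A" using sum_Suc_diff[OF AB] .
  finally show ?thesis by simp
qed

lemma decomp:
  assumes x: "x \<in> Zp p" and p: "p > 0" and xE: "x E = a"
  obtains z where "z \<in> Zp p" "zp_add p (zp_of_int p a) (zp_mult p (zp_of_int p (int p ^ E)) z) = x"
    "z 1 = x (Suc E) div int p ^ E"
proof -
  define P where "P = int p"
  have P: "P > 0" using p by (simp add: P_def)
  define z where "z = (\<lambda>k. x (k + E) div P ^ E)"
  have xm: "x (k + E) mod P ^ E = a" for k using Zp_mod[OF x, of E "k+E"] xE by (simp add: P_def)
  have xs: "x (k + E) = P ^ E * z k + a" for k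
    using xm[of k] unfolding z_def by (metis div_mult_mod_eq mult.commute)
  have zZ: "z \<in> Zp p"
    unfolding Zp_def
  proof (intro CollectI conjI allI)
    fix k
    have r: "0 \<le> x (k+E)" "x (k+E) < P ^ (k+E)" using Zp_range[OF x, of "k+E"] by (auto simp: P_def)
    show "0 \<le> z k" unfolding z_def using r P by (simp add: pos_imp_zdiv_nonneg_iff)
    have "x (k+E) < P ^ k * P ^ E" using r by (simp add: power_add)
    moreover have "x (k+E) div P ^ E * P ^ E \<le> x (k+E)"
      using P by (simp add: minus_mod_eq_div_mult[symmetric])
    ultimately have "x (k+E) div P ^ E * P ^ E < P ^ k * P ^ E" by linarith
    then show "z k < int p ^ k" unfolding z_def P_def[symmetric] using P
      by (meson mult_right_less_imp_less zero_le_power less_imp_le)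
  next
    fix k
    have "x (Suc k + E) mod (P ^ E * P ^ k) = P ^ E * (z (Suc k) mod P ^ k) + x (Suc k + E) mod P ^ E"
      unfolding z_def using P by (intro zmod_zmult2_eq) simp
    moreover have "x (Suc k + E) mod (P ^ E * P ^ k) = x (k + E)"
      using Zp_mod[OF x, of "k+E" "Suc k + E"] by (simp add: P_def power_add mult.commute add.commute)
    ultimately have "P ^ E * z k + a = P ^ E * (z (Suc k) mod P ^ k) + a"
      using xs[of k] xm[of "Suc k"] P by auto
    then show "z (Suc k) mod int p ^ k = z k" using P by (simp add: P_def)
  qed
  have "zp_add p (zp_of_int p a) (zp_mult p (zp_of_int p (int p ^ E)) z) = x"
  proof
    fix k
    have "zp_add p (zp_of_int p a) (zp_mult p (zp_of_int p (int p ^ E)) z) k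
        = (a + P ^ E * z k) mod P ^ k"
      unfolding zp_add_def zp_mult_def zp_of_int_def P_def
      by (simp add: mod_add_eq mod_mult_eq) (metis mod_add_right_eq mod_mult_left_eq)
    also have "\<dots> = x (k + E) mod P ^ k" using xs[of k] by (simp add: add.commute)
    also have "\<dots> = x k" using Zp_mod[OF x, of k "k+E"] by (simp add: P_def)
    finally show "zp_add p (zp_of_int p a) (zp_mult p (zp_of_int p (int p ^ E)) z) k = x k" .
  qed
  moreover have "z 1 = x (Suc E) div int p ^ E" by (simp add: z_def P_def)
  ultimately show ?thesis using zZ that by blast
qed

lemma approx_level:
  assumes UA: "unif_approx p \<Phi> f \<Lambda> h l \<delta>" and v: "v \<in> \<Lambda>" and n: "l \<le> n"
    and z: "z \<in> Zp p" and fv: "f v \<in> Zp p" and p: "p > 0"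
  shows "f (zp_add p v (zp_mult p (zp_of_int p (int p ^ phiexp \<Phi> n)) z)) (h+n+1)
     = (f v (h+n+1) + int p ^ (h+n) * ((z 1 * \<delta> n v 1) mod int p)) mod int p ^ (h+n+1)"
proof -
  define P where "P = int p"
  define M where "M = h + n + 1"
  have dZ: "\<delta> n v \<in> Zp p" and cg: "zp_cong p (h + n + 1)
             (f (zp_add p v (zp_mult p (zp_of_int p (int p ^ phiexp \<Phi> n)) z)))
             (zp_add p (f v) (zp_mult p (zp_mult p (zp_of_int p (int p ^ (h + n))) z) (\<delta> n v)))"
    using UA v n z unfolding unif_approx_def by auto
  have "f (zp_add p v (zp_mult p (zp_of_int p (int p ^ phiexp \<Phi> n)) z)) M
     = (f v M + ((P ^ (h+n) mod P ^ M * z M) mod P ^ M * \<delta> n v M) mod P ^ M) mod P ^ M"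
    using cg unfolding zp_cong_def zp_add_def zp_mult_def zp_of_int_def M_def P_def by simp
  also have "\<dots> = (f v M + P ^ (h+n) * (z M * \<delta> n v M)) mod P ^ M"
    by (metis mod_add_right_eq mod_mult_left_eq mult.assoc)
  also have "\<dots> = (f v M + P ^ (h+n) * ((z M * \<delta> n v M) mod P)) mod P ^ M"
  proof -
    have PM: "P ^ M = P ^ (h+n) * P" by (simp add: M_def)
    have "(P ^ (h+n) * (z M * \<delta> n v M)) mod P ^ M = P ^ (h+n) * ((z M * \<delta> n v M) mod P)"
      unfolding PM by (rule mod_mult_mult1)
    then show ?thesis by (metis mod_add_right_eq)
  qed
  also have "(z M * \<delta> n v M) mod P = (z 1 * \<delta> n v 1) mod P"
  proof -
    have "z M mod P = z 1" using Zp_mod[OF z, of 1 M] by (simp add: M_def P_def)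
    moreover have "\<delta> n v M mod P = \<delta> n v 1" using Zp_mod[OF dZ, of 1 M] by (simp add: M_def P_def)
    ultimately show ?thesis by (metis mod_mult_eq)
  qed
  finally show ?thesis by (simp add: M_def P_def)
qed

lemma eq_of_dvd_diff: "(P::int) dvd X - Y \<Longrightarrow> 0 \<le> X \<Longrightarrow> X < P \<Longrightarrow> 0 \<le> Y \<Longrightarrow> Y < P \<Longrightarrow> X = Y"
  by (metis mod_eq_dvd_iff mod_pos_pos_trivial)

lemma cancel_top:
  fixes F Q X Y P :: int
  assumes "(F + Q*X) mod (Q*P) = 0" "(F + Q*Y) mod (Q*P) = 0" "0 \<le> X" "X < P" "0 \<le> Y" "Y < P" "Q > 0"
  shows "X = Y"
proof -
  have "Q*P dvd (F + Q*X) - (F + Q*Y)" using assms(1,2) by (metis mod_eq_dvd_iff)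
  then have "Q*P dvd Q*(X - Y)" by (simp add: algebra_simps)
  then have "P dvd X - Y" using assms(7) by simp
  then show ?thesis using eq_of_dvd_diff assms by blast
qed

lemma sm_ge:
  assumes "strict_mono (\<Phi>::nat\<Rightarrow>nat)" shows "m \<le> \<Phi> m"
proof (induction m)
  case (Suc m)
  have "\<Phi> m < \<Phi> (Suc m)" using assms by (simp add: strict_mono_def)
  then show ?case using Suc.IH by simp
qed simp

primrec iter :: "(nat \<Rightarrow> int \<Rightarrow> int) \<Rightarrow> int \<Rightarrow> nat \<Rightarrow> int" where
  "iter g a0 0 = a0"
| "iter g a0 (Suc k) = g k (iter g a0 k)"

theorem corollary1:
  fixes p :: nat and \<Phi> :: "nat \<Rightarrow> nat" and f :: "(nat \<Rightarrow> int) \<Rightarrow> (nat \<Rightarrow> int)"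
    and n0 u h l :: nat and \<delta> :: "nat \<Rightarrow> (nat \<Rightarrow> int) \<Rightarrow> (nat \<Rightarrow> int)"
    and \<Lambda> :: "(nat \<Rightarrow> int) set"
  assumes "prime p"
    and "strict_mono \<Phi>"
    and "f \<in> classF p \<Phi>"
    and "u < p ^ Suc (\<Phi> n0)"
    and "\<Lambda> = {v \<in> Zp p. zp_cong p (Suc (\<Phi> n0)) v (zp_of_int p (int u))}"
    and "unif_approx p \<Phi> f \<Lambda> h l \<delta>"
    and "n0 + 1 \<ge> l"
    and "zp_cong p (h + n0 + 1) (f (zp_of_int p (int u))) (zp_of_int p 0)"
    and "\<forall>n\<ge>n0. \<forall>v\<in>\<Lambda>. \<delta> n v 1 \<noteq> 0"
  shows "\<exists>!\<xi>. \<xi> \<in> Zp p \<and> f \<xi> = zp_of_int p 0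
            \<and> zp_cong p (Suc (\<Phi> n0)) \<xi> (zp_of_int p (int u))
            \<and> (\<forall>n\<ge>n0. rho p \<Phi> \<xi> (n + 1) \<in> {0..p - 1})"
proof -
  note pr = assms(1) and sm = assms(2) and fF = assms(3) and uB = assms(4) and LD = assms(5)
    and UA = assms(6) and ln0 = assms(7) and f0 = assms(8) and unit = assms(9)
  define P where "P = int p"
  define e where "e = (\<lambda>m. Suc (\<Phi> m))"
  have p1: "p > 1" using pr prime_gt_1_nat by blast
  have p0: "p > 0" using p1 by simp
  have P1: "P > 1" using p1 by (simp add: P_def)
  have P0: "P > 0" using P1 by simp
  have primeP: "prime P" using pr by (simp add: P_def)
  have fZ: "\<And>x. x \<in> Zp p \<Longrightarrow> f x \<in> Zp p" using fF by (simp add: classF_def)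
  have fC: "\<And>n x y. n > 0 \<Longrightarrow> x \<in> Zp p \<Longrightarrow> y \<in> Zp p \<Longrightarrow> zp_cong p (phiexp \<Phi> n) x y \<Longrightarrow> zp_cong p n (f x) (f y)"
    using fF by (simp add: classF_def)
  have emono: "\<And>a b. a \<le> b \<Longrightarrow> e a \<le> e b" using sm by (simp add: e_def strict_mono_less_eq)
  have esuc: "\<And>m. e m < e (Suc m)" using sm by (simp add: e_def strict_mono_def)
  have ege: "\<And>m. m < e m" using sm_ge[OF sm] by (simp add: e_def le_imp_less_Suc)
  have uB': "int u < P ^ e n0" using uB unfolding P_def e_def by (metis of_nat_less_iff of_nat_power)
  have umod: "int u mod P ^ e n0 = int u" using uB' by simp
  have inL: "\<And>a. a mod P ^ e n0 = int u \<Longrightarrow> zp_of_int p a \<in> \<Lambda>"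
    using LD umod zp_of_int_Zp[OF p0] by (simp add: zp_cong_def zp_of_int_def P_def e_def)
  have form: "f (zp_add p (zp_of_int p a) (zp_mult p (zp_of_int p (P ^ e n)) z)) (h+n+2)
      = (f (zp_of_int p a) (h+n+2) + P ^ (h+n+1) * ((z 1 * \<delta> (Suc n) (zp_of_int p a) 1) mod P)) mod P ^ (h+n+2)"
    if "n0 \<le> n" "a mod P ^ e n0 = int u" "z \<in> Zp p" for n a z
  proof -
    have "l \<le> Suc n" using that ln0 by simp
    from approx_level[OF UA inL[OF that(2)] this that(3) fZ[OF zp_of_int_Zp[OF p0]] p0]
    show ?thesis by (simp add: phiexp_def e_def P_def)
  qed
  have dprop: "0 < \<delta> (Suc n) (zp_of_int p a) 1 \<and> \<delta> (Suc n) (zp_of_int p a) 1 < P"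
    if "n0 \<le> n" "a mod P ^ e n0 = int u" for n a
  proof -
    have "\<delta> (Suc n) (zp_of_int p a) \<in> Zp p" using UA inL[OF that(2)] that(1) ln0
      unfolding unif_approx_def by auto
    moreover have "\<delta> (Suc n) (zp_of_int p a) 1 \<noteq> 0" using unit inL[OF that(2)] that(1) by simp
    ultimately show ?thesis using Zp_range[of _ p 1] by (force simp: P_def)
  qed
  have step: "\<exists>t. 0 \<le> t \<and> t < P \<and> f (zp_of_int p (a + P ^ e n * t)) (h+n+2) = 0"
    if "n0 \<le> n" "a mod P ^ e n0 = int u" "f (zp_of_int p a) (h+n+1) = 0" for n a
  proof -
    define d where "d = \<delta> (Suc n) (zp_of_int p a) 1"
    define F where "F = f (zp_of_int p a) (h+n+2)"
    define N where "N = h + n + 1"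
    have fvZ: "f (zp_of_int p a) \<in> Zp p" using fZ zp_of_int_Zp[OF p0] by blast
    have "F mod P ^ N = 0" using Zp_mod[OF fvZ, of N "h+n+2"] that(3) by (simp add: F_def N_def P_def)
    then have Fc: "F = P ^ N * (F div P ^ N)" by (metis add.right_neutral div_mult_mod_eq mult.commute)
    define c where "c = F div P ^ N"
    have d: "0 < d" "d < P" using dprop[OF that(1,2)] by (auto simp: d_def)
    have "\<not> P dvd d" using d by (auto dest: zdvd_imp_le)
    then have "coprime P d" using primeP by (simp add: prime_imp_coprime)
    then obtain x y where xy: "x * P + y * d = 1" using bezout_int[of P d] by auto
    define t where "t = (- c * y) mod P"
    have t: "0 \<le> t" "t < P" using P0 by (auto simp: t_def)
    have "(c + t * d) mod P = (c + (- c * y) * d) mod P"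
      unfolding t_def by (metis mod_add_right_eq mod_mult_left_eq)
    also have "c + (- c * y) * d = (c * x) * P"
    proof -
      have "1 - y * d = x * P" using xy by linarith
      then have "c * (1 - y * d) = c * (x * P)" by simp
      then show ?thesis by (simp add: algebra_simps)
    qed
    finally have ctd: "(c + t * d) mod P = 0" by simp
    have "f (zp_of_int p (a + P ^ e n * t)) (h+n+2)
        = (F + P ^ N * ((t * d) mod P)) mod P ^ (h+n+2)"
    proof -
      have "zp_of_int p t 1 = t" using t by (simp add: zp_of_int_def P_def)
      then show ?thesis
        using form[OF that(1,2) zp_of_int_Zp[OF p0, of t]]
        unfolding zp_add_of_int by (simp add: F_def N_def d_def)
    qed
    also have "\<dots> = (P ^ N * (c + (t * d) mod P)) mod (P ^ N * P)"
      using Fc by (simp add: c_def N_def algebra_simps)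
    also have "\<dots> = P ^ N * ((c + (t * d) mod P) mod P)" by (rule mod_mult_mult1)
    also have "\<dots> = 0" using ctd by (simp add: mod_add_right_eq)
    finally show ?thesis using t by blast
  qed
  define T where "T = (\<lambda>n a. SOME t. 0 \<le> t \<and> t < P \<and> f (zp_of_int p (a + P ^ e n * t)) (h+n+2) = 0)"
  define V where "V = iter (\<lambda>k a. a + P ^ e (n0+k) * T (n0+k) a) (int u)"
  have V0: "V 0 = int u" by (simp add: V_def)
  have VS: "V (Suc k) = V k + P ^ e (n0+k) * T (n0+k) (V k)" for k by (simp add: V_def)
  have inv: "0 \<le> V k \<and> V k < P ^ e (n0+k) \<and> V k mod P ^ e n0 = int u \<and> f (zp_of_int p (V k)) (h+n0+k+1) = 0" for k
  proof (induction k)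
    case 0
    then show ?case using uB' umod f0 by (simp add: V0 zp_cong_def zp_of_int_def)
  next
    case (Suc k)
    let ?t = "T (n0+k) (V k)"
    have "\<exists>t. 0 \<le> t \<and> t < P \<and> f (zp_of_int p (V k + P ^ e (n0+k) * t)) (h+(n0+k)+2) = 0"
      using step[of "n0+k" "V k"] Suc.IH by (simp add: add.assoc)
    then have Tp: "0 \<le> ?t \<and> ?t < P \<and> f (zp_of_int p (V k + P ^ e (n0+k) * ?t)) (h+(n0+k)+2) = 0"
      unfolding T_def by (rule someI_ex)
    have "V (Suc k) < P ^ e (n0+k) + P ^ e (n0+k) * (P - 1)"
    proof -
      have "?t \<le> P - 1" using Tp by simp
      then have "P ^ e (n0+k) * ?t \<le> P ^ e (n0+k) * (P - 1)" using P0 by (simp add: mult_left_mono)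
      then show ?thesis using VS[of k] Suc.IH by linarith
    qed
    also have "\<dots> = P ^ Suc (e (n0+k))" by (simp add: algebra_simps)
    also have "\<dots> \<le> P ^ e (n0 + Suc k)" using esuc[of "n0+k"] P1
      by (intro power_increasing) (auto simp: Suc_le_eq)
    finally have lt: "V (Suc k) < P ^ e (n0 + Suc k)" .
    have "P ^ e n0 dvd P ^ e (n0+k)" by (simp add: emono le_imp_power_dvd)
    then obtain q where q: "P ^ e (n0+k) = P ^ e n0 * q" by (auto elim: dvdE)
    have "V (Suc k) mod P ^ e n0 = (V k + P ^ e n0 * (q * ?t)) mod P ^ e n0"
      unfolding VS q by (simp add: mult.assoc)
    also have "\<dots> = V k mod P ^ e n0" by simp
    finally have "V (Suc k) mod P ^ e n0 = V k mod P ^ e n0" .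
    then show ?case using Suc.IH Tp lt VS[of k] P0 by (simp add: add.assoc)
  qed
  have Tp: "0 \<le> T (n0+k) (V k) \<and> T (n0+k) (V k) < P" for k
  proof -
    have "\<exists>t. 0 \<le> t \<and> t < P \<and> f (zp_of_int p (V k + P ^ e (n0+k) * t)) (h+(n0+k)+2) = 0"
      using step[of "n0+k" "V k"] inv[of k] by (simp add: add.assoc)
    then have "0 \<le> T (n0+k) (V k) \<and> T (n0+k) (V k) < P \<and> f (zp_of_int p (V k + P ^ e (n0+k) * T (n0+k) (V k))) (h+(n0+k)+2) = 0"
      unfolding T_def by (rule someI_ex)
    then show ?thesis by simp
  qed
  have Vmod: "k \<le> k' \<Longrightarrow> V k' mod P ^ e (n0+k) = V k" for k k'
  proof (induction k')
    case 0
    then show ?case using inv[of 0] by (simp add: V0)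
  next
    case (Suc k')
    show ?case
    proof (cases "k = Suc k'")
      case True
      then show ?thesis using inv[of "Suc k'"] by simp
    next
      case False
      then have kk: "k \<le> k'" using Suc.prems by simp
      have "P ^ e (n0+k) dvd P ^ e (n0+k')" using kk by (simp add: emono le_imp_power_dvd)
      then obtain q where q: "P ^ e (n0+k') = P ^ e (n0+k) * q" by (auto elim: dvdE)
      have "V (Suc k') mod P ^ e (n0+k) = (V k' + P ^ e (n0+k) * (q * T (n0+k') (V k'))) mod P ^ e (n0+k)"
        unfolding VS q by (simp add: mult.assoc)
      also have "\<dots> = V k' mod P ^ e (n0+k)" by simp
      also have "\<dots> = V k" using Suc.IH[OF kk] .
      finally show ?thesis .
    qed
  qed
  define \<xi> where "\<xi> = (\<lambda>j. V j mod P ^ j)"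
  have xiV: "\<xi> j = V k mod P ^ j" if "j \<le> e (n0+k)" for j k
  proof (cases "j \<le> k")
    case True
    have "j \<le> e (n0+j)" using ege[of "n0+j"] by simp
    then have "P ^ j dvd P ^ e (n0+j)" by (simp add: le_imp_power_dvd)
    then have "V k mod P ^ j = V k mod P ^ e (n0+j) mod P ^ j" by (simp add: mod_mod_cancel)
    also have "\<dots> = V j mod P ^ j" using Vmod[OF True] by simp
    finally show ?thesis by (simp add: \<xi>_def)
  next
    case False
    have "P ^ j dvd P ^ e (n0+k)" using that by (simp add: le_imp_power_dvd)
    then have "V j mod P ^ j = V j mod P ^ e (n0+k) mod P ^ j" by (simp add: mod_mod_cancel)
    also have "\<dots> = V k mod P ^ j" using Vmod[of k j] False by simp
    finally show ?thesis by (simp add: \<xi>_def)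
  qed
  have xiZ: "\<xi> \<in> Zp p"
    unfolding Zp_def
  proof (intro CollectI conjI allI)
    fix j
    show "0 \<le> \<xi> j" "\<xi> j < int p ^ j" using P0 by (auto simp: \<xi>_def P_def)
  next
    fix j
    have "j \<le> e (n0 + Suc j)" using ege[of "n0 + Suc j"] by simp
    then have "\<xi> j = V (Suc j) mod P ^ j" by (rule xiV)
    also have "\<dots> = V (Suc j) mod P ^ Suc j mod P ^ j" by (simp add: mod_mod_cancel le_imp_power_dvd)
    finally show "\<xi> (Suc j) mod int p ^ j = \<xi> j" by (simp add: \<xi>_def P_def)
  qed
  have xie: "\<xi> (e (n0+k)) = V k" for k
    using xiV[of "e (n0+k)" k] inv[of k] by simp
  have fxi: "f \<xi> = zp_of_int p 0"
  proof
    fix m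
    define n where "n = n0 + m + 2"
    have pe: "phiexp \<Phi> n = e (n0 + Suc m)" by (simp add: phiexp_def n_def e_def)
    have zv: "zp_of_int p (V (Suc m)) \<in> Zp p" by (rule zp_of_int_Zp[OF p0])
    have "zp_cong p (phiexp \<Phi> n) \<xi> (zp_of_int p (V (Suc m)))"
      unfolding pe zp_cong_def using xie[of "Suc m"] inv[of "Suc m"]
      by (simp add: zp_of_int_def P_def)
    then have c1: "f \<xi> n = f (zp_of_int p (V (Suc m))) n"
      using fC[of n \<xi> "zp_of_int p (V (Suc m))"] xiZ zv by (simp add: n_def zp_cong_def)
    have "f (zp_of_int p (V (Suc m))) n = f (zp_of_int p (V (Suc m))) (h+n0+Suc m+1) mod int p ^ n"
      using Zp_mod[OF fZ[OF zv], of n "h+n0+Suc m+1"] by (simp add: n_def)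
    also have "\<dots> = 0" using inv[of "Suc m"] by simp
    finally have "f \<xi> n = 0" using c1 by simp
    then have "f \<xi> m = 0" using Zp_mod[OF fZ[OF xiZ], of m n] by (simp add: n_def)
    then show "f \<xi> m = zp_of_int p 0 m" by (simp add: zp_of_int_def)
  qed
  have rhoeq: "x (e (Suc n)) = x (e n) + P ^ e n * int (rho p \<Phi> x (n + 1))" if "x \<in> Zp p" for x n
  proof -
    have "Suc (\<Phi> n) \<le> Suc (\<Phi> (Suc n))" using esuc[of n] by (simp add: e_def)
    from tele[OF that p0 this] show ?thesis by (simp add: rho_def phiexp_def e_def P_def)
  qed
  have Q: "\<xi> \<in> Zp p \<and> f \<xi> = zp_of_int p 0
            \<and> zp_cong p (Suc (\<Phi> n0)) \<xi> (zp_of_int p (int u))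
            \<and> (\<forall>n\<ge>n0. rho p \<Phi> \<xi> (n + 1) \<in> {0..p - 1})"
  proof (intro conjI allI impI xiZ fxi)
    show "zp_cong p (Suc (\<Phi> n0)) \<xi> (zp_of_int p (int u))"
      using xie[of 0] umod by (simp add: zp_cong_def zp_of_int_def V0 e_def P_def)
  next
    fix n assume "n0 \<le> n"
    then obtain k where k: "n = n0 + k" using le_iff_add by blast
    have "V (Suc k) = V k + P ^ e n * int (rho p \<Phi> \<xi> (n + 1))"
      using rhoeq[OF xiZ, of n] xie[of k] xie[of "Suc k"] k by simp
    then have "int (rho p \<Phi> \<xi> (n + 1)) = T (n0+k) (V k)" using VS[of k] P0 k by simp
    then have "int (rho p \<Phi> \<xi> (n + 1)) < int p" using Tp[of k] by (simp add: P_def)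
    then show "rho p \<Phi> \<xi> (n + 1) \<in> {0..p - 1}" by simp
  qed
  have uniq: "y = \<xi>" if Qy: "y \<in> Zp p \<and> f y = zp_of_int p 0
            \<and> zp_cong p (Suc (\<Phi> n0)) y (zp_of_int p (int u))
            \<and> (\<forall>n\<ge>n0. rho p \<Phi> y (n + 1) \<in> {0..p - 1})" for y
  proof -
    have yZ: "y \<in> Zp p" and fy: "f y = zp_of_int p 0"
      and yc: "zp_cong p (Suc (\<Phi> n0)) y (zp_of_int p (int u))"
      and yr: "\<And>n. n0 \<le> n \<Longrightarrow> rho p \<Phi> y (n + 1) \<le> p - 1" using Qy by auto
    have ye: "y (e (n0+k)) = V k" for k
    proof (induction k)
      case 0
      then show ?case using yc umod by (simp add: zp_cong_def zp_of_int_def V0 e_def P_def)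
    next
      case (Suc k)
      define n where "n = n0 + k"
      define A where "A = e n"
      define a where "a = V k"
      define d where "d = \<delta> (Suc n) (zp_of_int p a) 1"
      define r where "r = int (rho p \<Phi> y (n + 1))"
      define t where "t = T n a"
      have nn: "n0 \<le> n" by (simp add: n_def)
      have amod: "a mod P ^ e n0 = int u" using inv[of k] by (simp add: a_def)
      have ar: "0 \<le> a" "a < P ^ A" using inv[of k] by (auto simp: a_def A_def n_def)
      have yA: "y A = a" using Suc.IH by (simp add: A_def a_def n_def)
      obtain z where zZ: "z \<in> Zp p"
        and zy: "zp_add p (zp_of_int p a) (zp_mult p (zp_of_int p (int p ^ A)) z) = y"
        and z1: "z 1 = y (Suc A) div int p ^ A"
        using decomp[OF yZ p0 yA] by blast
      have rr: "0 \<le> r" "r < P" using yr[OF nn] p0 by (auto simp: r_def P_def)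
      have yeS: "y (e (Suc n)) = a + P ^ A * r" using rhoeq[OF yZ, of n] yA by (simp add: A_def r_def)
      have "Suc A \<le> e (Suc n)" using esuc[of n] by (simp add: A_def)
      then have "y (Suc A) = y (e (Suc n)) mod P ^ Suc A" using Zp_mod[OF yZ, of "Suc A" "e (Suc n)"] by (simp add: P_def)
      also have "\<dots> = a + P ^ A * r"
      proof -
        have "P ^ A * r \<le> P ^ A * (P - 1)" using rr P0 by (intro mult_left_mono) auto
        then have "a + P ^ A * r < P ^ Suc A" using ar by (simp add: algebra_simps)
        moreover have "0 \<le> a + P ^ A * r" using ar rr P0 by simp
        ultimately show ?thesis unfolding yeS by simp
      qed
      finally have "z 1 = r" using z1 ar P0 by (simp add: P_def[symmetric] add.commute[of a])
      have d: "0 < d" "d < P" using dprop[OF nn amod] by (auto simp: d_def)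
      have tt: "0 \<le> t" "t < P" using Tp[of k] by (auto simp: t_def n_def a_def)
      define F where "F = f (zp_of_int p a) (h+n+2)"
      define Qn where "Qn = P ^ (h+n+1)"
      have Qpos: "Qn > 0" using P0 by (simp add: Qn_def)
      have QP: "P ^ (h+n+2) = Qn * P" by (simp add: Qn_def)
      have e1: "(F + Qn * ((r * d) mod P)) mod (Qn * P) = 0"
      proof -
        have zy': "zp_add p (zp_of_int p a) (zp_mult p (zp_of_int p (P ^ e n)) z) = y"
          using zy by (simp add: A_def P_def)
        have "f y (h+n+2) = 0" using fy by (simp add: zp_of_int_def)
        then show ?thesis using form[OF nn amod zZ] \<open>z 1 = r\<close> unfolding zy' QP
          by (simp add: F_def Qn_def d_def)
      qed
      have e2: "(F + Qn * ((t * d) mod P)) mod (Qn * P) = 0"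
      proof -
        have "zp_of_int p t 1 = t" using tt by (simp add: zp_of_int_def P_def)
        moreover have "f (zp_of_int p (a + P ^ e n * t)) (h+n+2) = 0"
          using inv[of "Suc k"] VS[of k] by (simp add: a_def t_def n_def add.assoc)
        ultimately show ?thesis
          using form[OF nn amod zp_of_int_Zp[OF p0, of t]] unfolding zp_add_of_int QP
          by (simp add: F_def Qn_def d_def)
      qed
      have "(r * d) mod P = (t * d) mod P"
        using cancel_top[OF e1 e2 _ _ _ _ Qpos] P0 by simp
      then have "P dvd r * d - t * d" using mod_eq_dvd_iff by blast
      moreover have "(r - t) * d = r * d - t * d" by (simp add: left_diff_distrib)
      ultimately have "P dvd (r - t) * d" by simp
      moreover have "\<not> P dvd d" using d by (auto dest: zdvd_imp_le)
      ultimately have "P dvd r - t" using primeP by (simp add: prime_dvd_mult_iff)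
      then have "r = t" using eq_of_dvd_diff rr tt by blast
      then have "y (e (Suc n)) = V (Suc k)" using yeS VS[of k] by (simp add: A_def a_def t_def n_def)
      then show ?case by (simp add: n_def)
    qed
    show "y = \<xi>"
    proof
      fix j
      have "j \<le> e (n0+j)" using ege[of "n0+j"] by simp
      then have "y j = y (e (n0+j)) mod P ^ j" using Zp_mod[OF yZ] by (simp add: P_def)
      then show "y j = \<xi> j" using ye[of j] by (simp add: \<xi>_def)
    qed
  qed
  show ?thesis
  proof (rule ex1I[of _ \<xi>])
    show "\<xi> \<in> Zp p \<and> f \<xi> = zp_of_int p 0
            \<and> zp_cong p (Suc (\<Phi> n0)) \<xi> (zp_of_int p (int u))
            \<and> (\<forall>n\<ge>n0. rho p \<Phi> \<xi> (n + 1) \<in> {0..p - 1})" by (rule Q)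
  next
    fix y assume "y \<in> Zp p \<and> f y = zp_of_int p 0
            \<and> zp_cong p (Suc (\<Phi> n0)) y (zp_of_int p (int u))
            \<and> (\<forall>n\<ge>n0. rho p \<Phi> y (n + 1) \<in> {0..p - 1})"
    then show "y = \<xi>" by (rule uniq)
  qed
qed

end
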